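(* For any random variable $X$ with values in a finite set $\mathcal{X}$, any $\delta\ge 0$ and any real $k$, $$\mathrm{H}^{\delta}_\infty(X)\ge k\iff\sum_{x\in\mathcal{X}}\max\left(P_X(x)-2^{-k},0\right)\le\delta.$$
   Context: $P_X(x)=\Pr[X=x]$. Min-entropy: $\mathrm{H}_\infty(Y)=-\log_2\max_y P_Y(y)$. The statistical distance of finitely supported distributions $X,Y$ is $d_1(X;Y)=\frac12\sum_z|P_X(z)-P_Y(z)|$ (sum over the union of supports). Smooth min-entropy: $\mathrm{H}^{\delta}_\infty(X)=\max\{\mathrm{H}_\infty(Y): Y \text{ finitely supported},\ d_1(X;Y)\le\delta\}$. *)

theory Defs
  imports "HOL-Probability.Probability_Mass_Function" "HOL-Library.Extended_Real"
begin

definition min_entropy :: "'a pmf \<Rightarrow> real" where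
  "min_entropy Y = - log 2 (Max (pmf Y ` set_pmf Y))"

definition stat_dist :: "'a pmf \<Rightarrow> 'a pmf \<Rightarrow> real" where
  "stat_dist X Y = (1/2) * (\<Sum>z \<in> set_pmf X \<union> set_pmf Y. \<bar>pmf X z - pmf Y z\<bar>)"

text \<open>Smooth min-entropy: the maximum (taken as supremum in the extended reals, so it is
  \<infinity> if unbounded) of min-entropies of finitely supported Y within distance delta.\<close>
definition smooth_min_entropy :: "real \<Rightarrow> 'a pmf \<Rightarrow> ereal" where
  "smooth_min_entropy \<delta> X =
     Sup {ereal (min_entropy Y) | Y. finite (set_pmf Y) \<and> stat_dist X Y \<le> \<delta>}"

end

theory Submission
  imports Defs
begin

lemma stat_dist_alt:
  assumes T: "finite T" "set_pmf X \<union> set_pmf Y \<subseteq> T"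
  shows "stat_dist X Y = (\<Sum>z\<in>T. max (pmf X z - pmf Y z) 0)"
proof -
  have 1: "(\<Sum>z\<in>set_pmf X \<union> set_pmf Y. \<bar>pmf X z - pmf Y z\<bar>) = (\<Sum>z\<in>T. \<bar>pmf X z - pmf Y z\<bar>)"
    by (rule sum.mono_neutral_left) (use T in \<open>auto simp: set_pmf_iff\<close>)
  have 2: "(\<Sum>z\<in>T. pmf X z - pmf Y z) = 0"
    using sum_pmf_eq_1[of T X] sum_pmf_eq_1[of T Y] T by (simp add: sum_subtractf)
  have 3: "(\<Sum>z\<in>T. \<bar>pmf X z - pmf Y z\<bar>) = (\<Sum>z\<in>T. 2 * max (pmf X z - pmf Y z) 0 - (pmf X z - pmf Y z))"
    by (rule sum.cong) (auto simp: max_def abs_if)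
  show ?thesis unfolding stat_dist_def 1 3 using 2
    by (simp add: sum_subtractf sum_distrib_left)
qed

definition fcost :: "'a pmf \<Rightarrow> 'a set \<Rightarrow> real \<Rightarrow> real" where
  "fcost X A s = (\<Sum>x\<in>A. max (pmf X x - s) 0)"

lemma fcost_mono: "s \<le> t \<Longrightarrow> fcost X A t \<le> fcost X A s"
  unfolding fcost_def by (rule sum_mono) auto

lemma fcost_lip:
  assumes "finite A" "s \<le> t"
  shows "fcost X A s \<le> fcost X A t + real (card A) * (t - s)"
proof -
  have "fcost X A s \<le> (\<Sum>x\<in>A. max (pmf X x - t) 0 + (t - s))"
    unfolding fcost_def by (rule sum_mono) (use assms in auto)
  also have "\<dots> = fcost X A t + real (card A) * (t - s)"
    by (simp add: sum.distrib fcost_def)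
  finally show ?thesis .
qed

lemma max_pmf_le:
  assumes "finite (set_pmf Y)"
  shows "pmf Y x \<le> Max (pmf Y ` set_pmf Y)" "0 < Max (pmf Y ` set_pmf Y)"
proof -
  obtain y where y: "y \<in> set_pmf Y" using set_pmf_not_empty[of Y] by blast
  have "pmf Y y \<le> Max (pmf Y ` set_pmf Y)" using assms y by auto
  moreover have "pmf Y y > 0" using y by (simp add: pmf_positive)
  ultimately show "0 < Max (pmf Y ` set_pmf Y)" by linarith
  show "pmf Y x \<le> Max (pmf Y ` set_pmf Y)"
  proof (cases "x \<in> set_pmf Y")
    case True then show ?thesis using assms by auto
  next
    case False then show ?thesis using \<open>0 < Max (pmf Y ` set_pmf Y)\<close> by (simp add: set_pmf_iff)
  qed
qed

lemma lower:
  assumes "finite A" "set_pmf X \<subseteq> A" "finite (set_pmf Y)"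
  shows "fcost X A (Max (pmf Y ` set_pmf Y)) \<le> stat_dist X Y"
proof -
  let ?m = "Max (pmf Y ` set_pmf Y)"
  let ?T = "A \<union> set_pmf Y"
  have "fcost X A ?m \<le> (\<Sum>z\<in>A. max (pmf X z - pmf Y z) 0)"
    unfolding fcost_def proof (rule sum_mono)
    fix x show "max (pmf X x - ?m) 0 \<le> max (pmf X x - pmf Y x) 0"
      using max_pmf_le(1)[OF assms(3), of x] by linarith
  qed
  also have "\<dots> \<le> (\<Sum>z\<in>?T. max (pmf X z - pmf Y z) 0)"
    by (rule sum_mono2) (use assms in auto)
  also have "\<dots> = stat_dist X Y"
    by (rule stat_dist_alt[symmetric]) (use assms in auto)
  finally show ?thesis .
qed

lemma construct:
  assumes inf: "infinite (UNIV :: 'a set)" and A: "finite A" "set_pmf X \<subseteq> A" and s: "s > 0"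
  shows "\<exists>Y :: 'a pmf. finite (set_pmf Y) \<and> (\<forall>x. pmf Y x \<le> s) \<and> stat_dist X Y \<le> fcost X A s"
proof -
  define r where "r = fcost X A s"
  have r0: "r \<ge> 0" unfolding r_def fcost_def by (rule sum_nonneg) auto
  obtain n :: nat where n: "r / s < real n" using reals_Archimedean2 by blast
  define N where "N = Suc n"
  have rN: "r / real N \<le> s"
    using n s r0 unfolding N_def by (simp add: field_simps)
  obtain F where F: "finite F" "card F = N" "A \<inter> F = {}"
    using finite_arbitrarily_large_disj[OF inf A(1)] by blast
  define g where "g x = (if x \<in> A then min (pmf X x) s else if x \<in> F then r / real N else 0)" for x
  have gnn: "\<And>x. 0 \<le> g x" unfolding g_def using r0 s by auto
  have sumA: "(\<Sum>x\<in>A. g x) = 1 - r"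
  proof -
    have "(\<Sum>x\<in>A. g x) = (\<Sum>x\<in>A. pmf X x - max (pmf X x - s) 0)"
      by (rule sum.cong) (auto simp: g_def)
    also have "\<dots> = 1 - r" using sum_pmf_eq_1[OF A] unfolding r_def fcost_def
      by (simp add: sum_subtractf)
    finally show ?thesis .
  qed
  have sumF: "(\<Sum>x\<in>F. g x) = r"
  proof -
    have "(\<Sum>x\<in>F. g x) = (\<Sum>x\<in>F. r / real N)"
      by (rule sum.cong) (use F in \<open>auto simp: g_def\<close>)
    also have "\<dots> = r" using F by (simp add: N_def)
    finally show ?thesis .
  qed
  have sumAF: "(\<Sum>x\<in>A \<union> F. g x) = 1"
    using sumA sumF F A by (simp add: sum.union_disjoint)
  have int: "(\<integral>\<^sup>+x. ennreal (g x) \<partial>count_space UNIV) = 1"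
  proof -
    have "(\<integral>\<^sup>+x. ennreal (g x) \<partial>count_space UNIV) = (\<Sum>x\<in>A \<union> F. ennreal (g x))"
      by (rule nn_integral_count_space') (use A F in \<open>auto simp: g_def\<close>)
    also have "\<dots> = ennreal (\<Sum>x\<in>A \<union> F. g x)"
      by (rule sum_ennreal) (use gnn in auto)
    finally show ?thesis using sumAF by simp
  qed
  define Y where "Y = embed_pmf g"
  have pY: "pmf Y x = g x" for x
    unfolding Y_def using pmf_embed_pmf[of g x] gnn int by blast
  have setY: "set_pmf Y \<subseteq> A \<union> F"
    by (auto simp: set_pmf_iff pY g_def split: if_splits)
  have fin: "finite (set_pmf Y)" using setY A F finite_subset by blast
  have le: "pmf Y x \<le> s" for x using rN s by (auto simp: pY g_def)
  have "stat_dist X Y = (\<Sum>z\<in>A \<union> F. max (pmf X z - pmf Y z) 0)"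
    by (rule stat_dist_alt) (use A F setY in auto)
  also have "\<dots> = (\<Sum>z\<in>A. max (pmf X z - pmf Y z) 0) + (\<Sum>z\<in>F. max (pmf X z - pmf Y z) 0)"
    using A F by (simp add: sum.union_disjoint)
  also have "(\<Sum>z\<in>F. max (pmf X z - pmf Y z) 0) = 0"
  proof (rule sum.neutral, intro ballI)
    fix z assume z: "z \<in> F"
    then have "z \<notin> set_pmf X" using A F by auto
    then have "pmf X z = 0" by (simp add: set_pmf_iff)
    then show "max (pmf X z - pmf Y z) 0 = 0" using pmf_nonneg[of Y z] by simp
  qed
  also have "(\<Sum>z\<in>A. max (pmf X z - pmf Y z) 0) = fcost X A s"
    unfolding fcost_def by (rule sum.cong) (auto simp: pY g_def)
  finally show ?thesis using fin le by auto
qed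

theorem lemma5:
  fixes X :: "'a pmf" and \<X> :: "'a set" and \<delta> k :: real
  assumes "infinite (UNIV :: 'a set)" and "finite \<X>" and "set_pmf X \<subseteq> \<X>" and "\<delta> \<ge> 0"
  shows "smooth_min_entropy \<delta> X \<ge> ereal k \<longleftrightarrow>
         (\<Sum>x\<in>\<X>. max (pmf X x - 2 powr (-k)) 0) \<le> \<delta>"
proof -
  let ?S = "{ereal (min_entropy Y) | Y. finite (set_pmf Y) \<and> stat_dist X Y \<le> \<delta>}"
  have goal: "?thesis \<longleftrightarrow> (Sup ?S \<ge> ereal k \<longleftrightarrow> fcost X \<X> (2 powr (-k)) \<le> \<delta>)"
    unfolding smooth_min_entropy_def fcost_def by simp
  have "Sup ?S \<ge> ereal k \<longleftrightarrow> fcost X \<X> (2 powr (-k)) \<le> \<delta>"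
  proof
    assume R: "fcost X \<X> (2 powr (-k)) \<le> \<delta>"
    obtain Y :: "'a pmf" where Y: "finite (set_pmf Y)" "\<forall>x. pmf Y x \<le> 2 powr (-k)"
      "stat_dist X Y \<le> fcost X \<X> (2 powr (-k))"
      using construct[OF assms(1,2,3), of "2 powr (-k)"] by auto
    let ?m = "Max (pmf Y ` set_pmf Y)"
    have m0: "0 < ?m" using max_pmf_le(2)[OF Y(1)] .
    have mle: "?m \<le> 2 powr (-k)" using Y(1,2) set_pmf_not_empty[of Y] by (auto simp: Max_le_iff)
    have "log 2 ?m \<le> log 2 (2 powr (-k))" using m0 mle by (subst log_le_cancel_iff) auto
    then have "k \<le> min_entropy Y" unfolding min_entropy_def by simp
    moreover have "ereal (min_entropy Y) \<in> ?S" using Y R by auto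
    ultimately show "Sup ?S \<ge> ereal k"
      by (meson Sup_upper ereal_less_eq(3) order_trans)
  next
    assume L: "Sup ?S \<ge> ereal k"
    have key: "fcost X \<X> t \<le> \<delta>" if t: "t > 2 powr (-k)" for t
    proof -
      have tpos: "t > 0" using t by (smt (verit) powr_gt_zero)
      have "ereal (- log 2 t) < Sup ?S"
      proof -
        have "log 2 (2 powr (-k)) < log 2 t" using t tpos by (subst log_less_cancel_iff) auto
        then have "- log 2 t < k" by simp
        then have "ereal (- log 2 t) < ereal k" by simp
        then show ?thesis using L by (rule less_le_trans)
      qed
      then obtain e where e: "e \<in> ?S" "ereal (- log 2 t) < e" using less_Sup_iff by blast
      then obtain Y where Y: "e = ereal (min_entropy Y)" "finite (set_pmf Y)" "stat_dist X Y \<le> \<delta>"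
        by auto
      let ?m = "Max (pmf Y ` set_pmf Y)"
      have m0: "0 < ?m" using max_pmf_le(2)[OF Y(2)] .
      have "- log 2 t < - log 2 ?m" using e Y unfolding min_entropy_def by simp
      then have "?m < t" using m0 tpos by simp
      then have "fcost X \<X> t \<le> fcost X \<X> ?m" by (intro fcost_mono) simp
      also have "\<dots> \<le> stat_dist X Y" using lower[OF assms(2,3) Y(2)] .
      finally show ?thesis using Y by simp
    qed
    show "fcost X \<X> (2 powr (-k)) \<le> \<delta>"
    proof (rule field_le_epsilon)
      fix e :: real assume e: "0 < e"
      define t where "t = 2 powr (-k) + e / (real (card \<X>) + 1)"
      have d: "e / (real (card \<X>) + 1) > 0" using e by simp
      have "fcost X \<X> (2 powr (-k)) \<le> fcost X \<X> t + real (card \<X>) * (t - 2 powr (-k))"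
        using fcost_lip[OF assms(2), of "2 powr (-k)" t] d unfolding t_def by simp
      also have "real (card \<X>) * (t - 2 powr (-k)) \<le> e"
        unfolding t_def using e by (simp add: field_simps)
      finally show "fcost X \<X> (2 powr (-k)) \<le> \<delta> + e" using key[of t] d unfolding t_def by simp
    qed
  qed
  then show ?thesis using goal by simp
qed

end
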